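(* Given an LDODOSP instance, let $(S^d,T^d)_{d\in\{1,\dots,D\}}$ be feasible period counters. Then: $T^{l_w}=0$ and $S^{D-l_w+1}=S^D$; $T^{d+l_w}\le S^d$ for all $1\le d\le D-l_w$; $S^d\le T^{d+u_w}$ for all $1\le d\le D-u_w$; $S^1=S^{l_o}$ and $T^{D-l_o+1}=T^D$; $S^{d+l_o}-N\le T^d$ for all $1\le d\le D-l_o$; $T^d+N\le S^{d+u_o}$ for all $1\le d\le D-u_o$; $r_l^d\le S^d-T^d\le r_u^d$ for all $1\le d\le D$.
   Context: An instance of the Days On Days Off Scheduling Problem (DODOSP) consists of integers $D\ge 1$ (days), $N\ge 1$ (workers), bounds $l_w,u_w,l_o,u_o,U_w,U_o\in\mathbb{N}$, and for each day $d\in\{1,\dots,D\}$ integers $0\le r_l^d\le r_u^d\le N$. A schedule is a map $f:\{n_1,\dots,n_N\}\times\{1,\dots,D\}\to\{\mathrm{ON},\mathrm{OFF}\}$ (not cyclic). A work period (resp. off period) of a worker is an inclusion-wise maximal set of consecutive days on which the worker is ON (resp. OFF). A schedule is feasible if on every day $d$ the number of workers that are ON lies in $[r_l^d,r_u^d]$, every work period has length between $l_w$ and $u_w$, every off period has length between $l_o$ and $u_o$, every worker is ON on at most $U_w$ days and OFF on at most $U_o$ days. The LDODOSP is the DODOSP restricted to instances with $U_w=U_o=D$. Integers $(S^d,T^d)_{d\in\{1,\dots,D\}}$ are period counters representing a schedule if for each $d$, $S^d$ is the number of work periods (over all workers) whose first day is among days $1,\dots,d$, and $T^d$ is the number of work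 periods whose last day is among days $1,\dots,d-1$. Period counters are feasible (for a given instance) if they represent a feasible schedule of that instance. *)

theory Defs
  imports Main
begin

text \<open>A schedule is f :: nat \<Rightarrow> nat \<Rightarrow> bool; f i d = True means worker i (0 \<le> i < N)
  is ON on day d (1 \<le> d \<le> D); False means OFF. Values outside this range are irrelevant.\<close>

definition consecutive :: "nat set \<Rightarrow> bool" where
  "consecutive P \<longleftrightarrow> (\<exists>a b. a \<le> b \<and> P = {a..b})"

definition status_block :: "nat \<Rightarrow> (nat \<Rightarrow> nat \<Rightarrow> bool) \<Rightarrow> nat \<Rightarrow> bool \<Rightarrow> nat set \<Rightarrow> bool" where
  "status_block D f i v P \<longleftrightarrow> consecutive P \<and> P \<subseteq> {1..D} \<and> (\<forall>d\<in>P. f i d = v)"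

definition period :: "nat \<Rightarrow> (nat \<Rightarrow> nat \<Rightarrow> bool) \<Rightarrow> nat \<Rightarrow> bool \<Rightarrow> nat set \<Rightarrow> bool" where
  "period D f i v P \<longleftrightarrow> status_block D f i v P \<and>
     (\<forall>Q. status_block D f i v Q \<and> P \<subseteq> Q \<longrightarrow> Q = P)"

definition feasible_schedule ::
  "nat \<Rightarrow> nat \<Rightarrow> nat \<Rightarrow> nat \<Rightarrow> nat \<Rightarrow> nat \<Rightarrow> nat \<Rightarrow> nat \<Rightarrow> (nat \<Rightarrow> nat) \<Rightarrow> (nat \<Rightarrow> nat)
   \<Rightarrow> (nat \<Rightarrow> nat \<Rightarrow> bool) \<Rightarrow> bool" where
  "feasible_schedule D N lw uw lo uo Uw Uo rl ru f \<longleftrightarrow>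
     (\<forall>d\<in>{1..D}. rl d \<le> card {i. i < N \<and> f i d} \<and> card {i. i < N \<and> f i d} \<le> ru d) \<and>
     (\<forall>i<N. \<forall>P. period D f i True P \<longrightarrow> lw \<le> card P \<and> card P \<le> uw) \<and>
     (\<forall>i<N. \<forall>P. period D f i False P \<longrightarrow> lo \<le> card P \<and> card P \<le> uo) \<and>
     (\<forall>i<N. card {d\<in>{1..D}. f i d} \<le> Uw \<and> card {d\<in>{1..D}. \<not> f i d} \<le> Uo)"

definition represents :: "nat \<Rightarrow> nat \<Rightarrow> (nat \<Rightarrow> nat \<Rightarrow> bool) \<Rightarrow> (nat \<Rightarrow> int) \<Rightarrow> (nat \<Rightarrow> int) \<Rightarrow> bool" where
  "represents D N f S T \<longleftrightarrow>
     (\<forall>d\<in>{1..D}.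
        S d = int (card {(i, P). i < N \<and> period D f i True P \<and> Min P \<le> d}) \<and>
        T d = int (card {(i, P). i < N \<and> period D f i True P \<and> Max P \<le> d - 1}))"

definition feasible_counters ::
  "nat \<Rightarrow> nat \<Rightarrow> nat \<Rightarrow> nat \<Rightarrow> nat \<Rightarrow> nat \<Rightarrow> nat \<Rightarrow> nat \<Rightarrow> (nat \<Rightarrow> nat) \<Rightarrow> (nat \<Rightarrow> nat)
   \<Rightarrow> (nat \<Rightarrow> int) \<Rightarrow> (nat \<Rightarrow> int) \<Rightarrow> bool" where
  "feasible_counters D N lw uw lo uo Uw Uo rl ru S T \<longleftrightarrow>
     (\<exists>f. feasible_schedule D N lw uw lo uo Uw Uo rl ru f \<and> represents D N f S T)"

end

theory Submission
  imports Defs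
begin

lemma period_ab:
  assumes "period D f i v P"
  shows "\<exists>a b. P = {a..b} \<and> Min P = a \<and> Max P = b \<and> 1 \<le> a \<and> a \<le> b \<and> b \<le> D \<and>
         card P = Suc b - a \<and> (\<forall>x\<in>P. f i x = v)"
proof -
  from assms obtain a b where ab: "a \<le> b" "P = {a..b}" "P \<subseteq> {1..D}" "\<forall>x\<in>P. f i x = v"
    unfolding period_def status_block_def consecutive_def by blast
  have "Min P = a" using ab by (intro Min_eqI) auto
  moreover have "Max P = b" using ab by (intro Max_eqI) auto
  moreover have "1 \<le> a" "b \<le> D" using ab by auto
  ultimately show ?thesis using ab by auto
qed

lemma period_basic:
  assumes "period D f i v P"
  shows "P = {Min P..Max P} \<and> 1 \<le> Min P \<and> Min P \<le> Max P \<and> Max P \<le> D \<and>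
         card P = Suc (Max P) - Min P \<and> (\<forall>x\<in>P. f i x = v) \<and> P \<subseteq> {1..D}"
proof -
  obtain a b where "P = {a..b}" "Min P = a" "Max P = b" "1 \<le> a" "a \<le> b" "b \<le> D"
    "card P = Suc b - a" "\<forall>x\<in>P. f i x = v"
    using period_ab[OF assms] by blast
  moreover have "P \<subseteq> {1..D}" using calculation by auto
  ultimately show ?thesis by metis
qed

lemma block_interval:
  "a \<le> b \<Longrightarrow> 1 \<le> a \<Longrightarrow> b \<le> D \<Longrightarrow> \<forall>x\<in>{a..b}. f i x = v \<Longrightarrow> status_block D f i v {a..b}"
  by (auto simp: status_block_def consecutive_def)

lemma period_right:
  assumes p: "period D f i v P" and m: "Max P < D"
  shows "f i (Suc (Max P)) \<noteq> v"
proof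
  assume fv0: "f i (Suc (Max P)) = v"
  have fv: "f i (Suc (Max P)) = v" by (rule fv0)
  obtain a b where b: "P = {a..b}" "1 \<le> a" "a \<le> b" "b \<le> D" "\<forall>x\<in>P. f i x = v"
    and mM: "Min P = a" "Max P = b"
    using period_ab[OF p] by blast
  let ?Q = "{a..Suc b}"
  have fv': "f i (Suc b) = v" using fv mM by simp
  have m': "b < D" using m mM by simp
  have "\<forall>x\<in>?Q. f i x = v"
  proof
    fix x assume "x \<in> ?Q"
    then have "x \<in> P \<or> x = Suc b" using b(1) by auto
    then show "f i x = v" using b(5) fv' by blast
  qed
  then have "status_block D f i v ?Q" using b(2,3) m' by (intro block_interval) auto
  moreover have "P \<subseteq> ?Q" using b(1) by auto
  ultimately have "?Q = P" using p unfolding period_def by blast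
  moreover have "Suc b \<in> ?Q" using b(3) by auto
  moreover have "Suc b \<notin> P" using b(1) by auto
  ultimately show False by simp
qed

lemma period_left:
  assumes p: "period D f i v P" and m: "1 < Min P"
  shows "f i (Min P - 1) \<noteq> v"
proof
  assume fv: "f i (Min P - 1) = v"
  obtain a b where b: "P = {a..b}" "1 \<le> a" "a \<le> b" "b \<le> D" "\<forall>x\<in>P. f i x = v"
    and mM: "Min P = a" "Max P = b"
    using period_ab[OF p] by blast
  let ?Q = "{a - 1..b}"
  have fv': "f i (a - 1) = v" using fv mM by simp
  have m': "1 < a" using m mM by simp
  have "\<forall>x\<in>?Q. f i x = v"
  proof
    fix x assume "x \<in> ?Q"
    then have "x \<in> P \<or> x = a - 1" using b(1) by auto
    then show "f i x = v" using b(5) fv' by blast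
  qed
  then have "status_block D f i v ?Q" using b(3,4) m' by (intro block_interval) auto
  moreover have "P \<subseteq> ?Q" using b(1) by auto
  ultimately have "?Q = P" using p unfolding period_def by blast
  moreover have "a - 1 \<in> ?Q" using b(3) by auto
  moreover have "a - 1 \<notin> P" using b(1) m' by auto
  ultimately show False by simp
qed

lemma block_union:
  assumes "status_block D f i v P" "status_block D f i v Q" "x \<in> P" "x \<in> Q"
  shows "status_block D f i v (P \<union> Q)"
proof -
  obtain a b c e where "P = {a..b}" "Q = {c..e}" "a \<le> b" "c \<le> e"
    using assms unfolding status_block_def consecutive_def by blast
  moreover have "{a..b} \<union> {c..e} = {min a c..max b e}"
    using assms calculation by auto
  ultimately show ?thesis using assms unfolding status_block_def consecutive_def
    by (metis Un_iff Un_least max.coboundedI1 min.coboundedI1)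
qed

lemma period_unique:
  assumes "period D f i v P" "period D f i v Q" "x \<in> P" "x \<in> Q"
  shows "P = Q"
proof -
  have "status_block D f i v (P \<union> Q)" using assms block_union unfolding period_def by metis
  then have "P \<union> Q = P" "P \<union> Q = Q" using assms unfolding period_def by blast+
  then show ?thesis by simp
qed

lemma period_exists:
  assumes "d \<in> {1..D}"
  shows "\<exists>P. period D f i (f i d) P \<and> d \<in> P"
proof -
  define F where "F = {Q. status_block D f i (f i d) Q \<and> d \<in> Q}"
  have "F \<subseteq> Pow {1..D}" unfolding F_def status_block_def by auto
  then have fin: "finite F" by (meson finite_Pow_iff finite_atLeastAtMost finite_subset)
  have "{d..d} \<in> F" unfolding F_def using assms block_interval[of d d D f i "f i d"] by auto
  then have "F \<noteq> {}" by blast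
  from finite_has_maximal[OF fin this] obtain m where m: "m \<in> F" "\<forall>b\<in>F. m \<le> b \<longrightarrow> m = b" by blast
  have "period D f i (f i d) m"
    unfolding period_def using m unfolding F_def by blast
  then show ?thesis using m(1) unfolding F_def by blast
qed

lemma inside_right:
  assumes "period D f i v Q" "d \<in> Q" "d < r" "f i r \<noteq> v" "x \<in> Q"
  shows "x < r"
proof (rule ccontr)
  assume c: "\<not> x < r"
  obtain a b where b: "Q = {a..b}" "\<forall>x\<in>Q. f i x = v"
    using period_ab[OF assms(1)] by blast
  have "r \<in> {a..b}" using assms(2,3,5) c b(1) by auto
  then show False using b assms(4) by blast
qed

lemma inside_left:
  assumes "period D f i v Q" "d \<in> Q" "l < d" "f i l \<noteq> v" "x \<in> Q"
  shows "l < x"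
proof (rule ccontr)
  assume c: "\<not> l < x"
  obtain a b where b: "Q = {a..b}" "\<forall>x\<in>Q. f i x = v"
    using period_ab[OF assms(1)] by blast
  have "l \<in> {a..b}" using assms(2,3,5) c b(1) by auto
  then show False using b assms(4) by blast
qed

lemma period_order:
  assumes "period D f i v P1" "period D f i v P2" "P1 \<noteq> P2"
  shows "Max P1 < Min P2 \<or> Max P2 < Min P1"
proof -
  obtain a1 b1 where b1: "P1 = {a1..b1}" "a1 \<le> b1" and m1: "Min P1 = a1" "Max P1 = b1"
    using period_ab[OF assms(1)] by blast
  obtain a2 b2 where b2: "P2 = {a2..b2}" "a2 \<le> b2" and m2: "Min P2 = a2" "Max P2 = b2"
    using period_ab[OF assms(2)] by blast
  have "b1 < a2 \<or> b2 < a1"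
  proof (rule ccontr)
    assume a: "\<not> (b1 < a2 \<or> b2 < a1)"
    have "max a1 a2 \<in> P1" "max a1 a2 \<in> P2" using a b1 b2 by auto
    then show False using period_unique[OF assms(1,2)] assms(3) by blast
  qed
  then show ?thesis using m1 m2 by simp
qed

lemma period_mem_iff:
  assumes "period D f i v P"
  shows "x \<in> P \<longleftrightarrow> Min P \<le> x \<and> x \<le> Max P"
proof -
  obtain a b where b: "P = {a..b}" and m: "Min P = a" "Max P = b"
    using period_ab[OF assms] by blast
  show ?thesis unfolding m using b(1) by simp
qed

lemma period_facts:
  assumes "period D f i v P"
  shows "1 \<le> Min P" "Min P \<le> Max P" "Max P \<le> D" "card P = Suc (Max P) - Min P"
    "\<And>x. x \<in> P \<Longrightarrow> f i x = v" "P \<subseteq> {1..D}" "finite P" "Min P \<in> P" "Max P \<in> P"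
proof -
  have b: "1 \<le> Min P \<and> Min P \<le> Max P \<and> Max P \<le> D \<and>
         card P = Suc (Max P) - Min P \<and> (\<forall>x\<in>P. f i x = v) \<and> P \<subseteq> {1..D}"
    using period_basic[OF assms] by blast
  then show "1 \<le> Min P" "Min P \<le> Max P" "Max P \<le> D" "card P = Suc (Max P) - Min P"
    "\<And>x. x \<in> P \<Longrightarrow> f i x = v" "P \<subseteq> {1..D}" by blast+
  then show "finite P" using finite_subset by blast
  show "Min P \<in> P" "Max P \<in> P" using period_mem_iff[OF assms] b by auto
qed

lemma gap:
  assumes off: "\<And>Q. period D f i False Q \<Longrightarrow> lo \<le> card Q"
    and p1: "period D f i True P1" and p2: "period D f i True P2" and lt: "Max P1 < Min P2"
  shows "Max P1 + lo < Min P2"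
proof -
  have "Max P1 < D" using lt period_facts[OF p2] by linarith
  then have fF: "f i (Suc (Max P1)) = False" using period_right[OF p1] by blast
  have dm: "Suc (Max P1) \<in> {1..D}" using \<open>Max P1 < D\<close> by auto
  obtain Q where Q: "period D f i (f i (Suc (Max P1))) Q" "Suc (Max P1) \<in> Q"
    using period_exists[OF dm] by blast
  have Q': "period D f i False Q" using Q(1) fF by simp
  have t1: "f i (Max P1) \<noteq> False" using period_facts(5,9)[OF p1] by simp
  have t2: "f i (Min P2) \<noteq> False" using period_facts(5,8)[OF p2] by simp
  have "Suc (Max P1) \<noteq> Min P2" using fF t2 by auto
  then have lt2: "Suc (Max P1) < Min P2" using lt by linarith
  have "Q \<subseteq> {Max P1<..<Min P2}"
  proof
    fix x assume "x \<in> Q"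
    then show "x \<in> {Max P1<..<Min P2}"
      using inside_left[OF Q' Q(2) _ t1 \<open>x \<in> Q\<close>] inside_right[OF Q' Q(2) lt2 t2 \<open>x \<in> Q\<close>]
      by simp
  qed
  then have "card Q \<le> card {Max P1<..<Min P2}" by (intro card_mono) auto
  then have "card Q \<le> Min P2 - Suc (Max P1)" by simp
  moreover have "lo \<le> card Q" using off Q' by blast
  ultimately show ?thesis using lt2 by linarith
qed

theorem lemma5p6:
  fixes D N lw uw lo uo :: nat and rl ru :: "nat \<Rightarrow> nat" and S T :: "nat \<Rightarrow> int"
  assumes "D \<ge> 1" and "N \<ge> 1"
    and "\<forall>d\<in>{1..D}. rl d \<le> ru d \<and> ru d \<le> N"
    and "feasible_counters D N lw uw lo uo D D rl ru S T"
  shows "(1 \<le> lw \<and> lw \<le> D \<longrightarrow> T lw = 0 \<and> S (D - lw + 1) = S D)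
    \<and> (\<forall>d. 1 \<le> d \<and> d + lw \<le> D \<longrightarrow> T (d + lw) \<le> S d)
    \<and> (\<forall>d. 1 \<le> d \<and> d + uw \<le> D \<longrightarrow> S d \<le> T (d + uw))
    \<and> (1 \<le> lo \<and> lo \<le> D \<longrightarrow> S 1 = S lo \<and> T (D - lo + 1) = T D)
    \<and> (\<forall>d. 1 \<le> d \<and> d + lo \<le> D \<longrightarrow> S (d + lo) - int N \<le> T d)
    \<and> (\<forall>d. 1 \<le> d \<and> d + uo \<le> D \<longrightarrow> T d + int N \<le> S (d + uo))
    \<and> (\<forall>d\<in>{1..D}. int (rl d) \<le> S d - T d \<and> S d - T d \<le> int (ru d))"
proof -
  from assms(4) obtain f where fs: "feasible_schedule D N lw uw lo uo D D rl ru f"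
    and rep: "represents D N f S T"
    unfolding feasible_counters_def by blast
  have wlen: "lw \<le> card P \<and> card P \<le> uw" if "i < N" "period D f i True P" for i P
    using fs that unfolding feasible_schedule_def by blast
  have olen: "lo \<le> card P \<and> card P \<le> uo" if "i < N" "period D f i False P" for i P
    using fs that unfolding feasible_schedule_def by blast
  have cnt: "rl d \<le> card {i. i < N \<and> f i d} \<and> card {i. i < N \<and> f i d} \<le> ru d"
    if "d \<in> {1..D}" for d
    using fs that unfolding feasible_schedule_def by blast
  define A where "A d = {(i, P). i < N \<and> period D f i True P \<and> Min P \<le> d}" for d
  define B where "B d = {(i, P). i < N \<and> period D f i True P \<and> Max P \<le> d - 1}" for d
  have SA: "S d = int (card (A d))" if "d \<in> {1..D}" for d
    using rep that unfolding represents_def A_def by blast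
  have TB: "T d = int (card (B d))" if "d \<in> {1..D}" for d
    using rep that unfolding represents_def B_def by blast
  have finW: "finite {(i, P). i < N \<and> period D f i True P}"
  proof (rule finite_subset)
    show "{(i, P). i < N \<and> period D f i True P} \<subseteq> {..<N} \<times> Pow {1..D}"
      using period_facts(6) by fastforce
    show "finite ({..<N} \<times> Pow {1..D})" by simp
  qed
  have finA: "finite (A d)" for d
    by (rule finite_subset[OF _ finW]) (auto simp: A_def)
  have finB: "finite (B d)" for d
    by (rule finite_subset[OF _ finW]) (auto simp: B_def)
  have diff: "S x - T y = int (card (A x - B y))"
    if "x \<in> {1..D}" "y \<in> {1..D}" "B y \<subseteq> A x" for x y
  proof -
    have "card (B y) \<le> card (A x)" using card_mono[OF finA that(3)] .
    moreover have "card (A x - B y) = card (A x) - card (B y)"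
      using card_Diff_subset[OF finB that(3)] .
    ultimately show ?thesis using SA[OF that(1)] TB[OF that(2)] by simp
  qed
  have part1: "1 \<le> lw \<and> lw \<le> D \<longrightarrow> T lw = 0 \<and> S (D - lw + 1) = S D"
  proof
    assume h: "1 \<le> lw \<and> lw \<le> D"
    have "B lw = {}"
    proof -
      have False if "i < N" "period D f i True P" "Max P \<le> lw - 1" for i P
        using wlen[OF that(1,2)] period_facts(1,2,4)[OF that(2)] that(3) h by linarith
      then show ?thesis unfolding B_def by blast
    qed
    then have "T lw = 0" using TB[of lw] h by simp
    moreover have "A (D - lw + 1) = A D"
    proof -
      have "Min P \<le> D - lw + 1 \<longleftrightarrow> Min P \<le> D" if "i < N" "period D f i True P" for i P
        using wlen[OF that(1,2)] period_facts(2,3,4)[OF that(2)] h by linarith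
      then show ?thesis unfolding A_def by blast
    qed
    moreover have "D - lw + 1 \<in> {1..D}" "D \<in> {1..D}" using h assms(1) by auto
    ultimately show "T lw = 0 \<and> S (D - lw + 1) = S D" using SA by metis
  qed
  have part2: "\<forall>d. 1 \<le> d \<and> d + lw \<le> D \<longrightarrow> T (d + lw) \<le> S d"
  proof (intro allI impI)
    fix d assume h: "1 \<le> d \<and> d + lw \<le> D"
    have "B (d + lw) \<subseteq> A d"
    proof -
      have "Min P \<le> d" if "i < N" "period D f i True P" "Max P \<le> d + lw - 1" for i P
        using wlen[OF that(1,2)] period_facts(2,4)[OF that(2)] that(3) h by linarith
      then show ?thesis unfolding A_def B_def by blast
    qed
    then have "card (B (d + lw)) \<le> card (A d)" using card_mono[OF finA] by blast
    then show "T (d + lw) \<le> S d" using SA[of d] TB[of "d + lw"] h by simp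
  qed
  have part3: "\<forall>d. 1 \<le> d \<and> d + uw \<le> D \<longrightarrow> S d \<le> T (d + uw)"
  proof (intro allI impI)
    fix d assume h: "1 \<le> d \<and> d + uw \<le> D"
    have "A d \<subseteq> B (d + uw)"
    proof -
      have "Max P \<le> d + uw - 1" if "i < N" "period D f i True P" "Min P \<le> d" for i P
        using wlen[OF that(1,2)] period_facts(1,2,4)[OF that(2)] that(3) h by linarith
      then show ?thesis unfolding A_def B_def by blast
    qed
    then have "card (A d) \<le> card (B (d + uw))" using card_mono[OF finB] by blast
    then show "S d \<le> T (d + uw)" using SA[of d] TB[of "d + uw"] h by simp
  qed
  have part4: "1 \<le> lo \<and> lo \<le> D \<longrightarrow> S 1 = S lo \<and> T (D - lo + 1) = T D"
  proof
    assume h: "1 \<le> lo \<and> lo \<le> D"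
    have "A 1 = A lo"
    proof -
      have "Min P \<le> 1 \<longleftrightarrow> Min P \<le> lo" if "i < N" "period D f i True P" for i P
      proof
        assume "Min P \<le> 1" then show "Min P \<le> lo" using h by linarith
      next
        assume m: "Min P \<le> lo"
        show "Min P \<le> 1"
        proof (rule ccontr)
          assume "\<not> Min P \<le> 1"
          then have gt: "1 < Min P" by simp
          have fF: "f i (Min P - 1) = False" using period_left[OF that(2) gt] by blast
          have dm: "Min P - 1 \<in> {1..D}" using gt period_facts(2,3)[OF that(2)] by auto
          obtain Q where Q: "period D f i (f i (Min P - 1)) Q" "Min P - 1 \<in> Q"
            using period_exists[OF dm] by blast
          have Q': "period D f i False Q" using Q(1) fF by simp
          have t2: "f i (Min P) \<noteq> False" using period_facts(5,8)[OF that(2)] by simp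
          have lt2: "Min P - 1 < Min P" using gt by simp
          have "Q \<subseteq> {1..<Min P}"
          proof
            fix x assume "x \<in> Q"
            then show "x \<in> {1..<Min P}"
              using inside_right[OF Q' Q(2) lt2 t2 \<open>x \<in> Q\<close>] period_facts(6)[OF Q'] by auto
          qed
          then have "card Q \<le> card {1..<Min P}" by (intro card_mono) auto
          then have "card Q \<le> Min P - 1" by simp
          moreover have "lo \<le> card Q" using olen[OF that(1) Q'] by blast
          ultimately show False using m gt by linarith
        qed
      qed
      then show ?thesis unfolding A_def by blast
    qed
    moreover have "B (D - lo + 1) = B D"
    proof -
      have "Max P \<le> D - lo \<longleftrightarrow> Max P \<le> D - 1" if "i < N" "period D f i True P" for i P
      proof
        assume "Max P \<le> D - lo" then show "Max P \<le> D - 1" using h by linarith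
      next
        assume m: "Max P \<le> D - 1"
        show "Max P \<le> D - lo"
        proof (rule ccontr)
          assume c: "\<not> Max P \<le> D - lo"
          have lt: "Max P < D" using m h by linarith
          have fF: "f i (Suc (Max P)) = False" using period_right[OF that(2) lt] by blast
          have dm: "Suc (Max P) \<in> {1..D}" using lt by auto
          obtain Q where Q: "period D f i (f i (Suc (Max P))) Q" "Suc (Max P) \<in> Q"
            using period_exists[OF dm] by blast
          have Q': "period D f i False Q" using Q(1) fF by simp
          have t1: "f i (Max P) \<noteq> False" using period_facts(5,9)[OF that(2)] by simp
          have lt2: "Max P < Suc (Max P)" by simp
          have "Q \<subseteq> {Max P<..D}"
          proof
            fix x assume "x \<in> Q"
            then show "x \<in> {Max P<..D}"
              using inside_left[OF Q' Q(2) lt2 t1 \<open>x \<in> Q\<close>] period_facts(6)[OF Q'] by auto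
          qed
          then have "card Q \<le> card {Max P<..D}" by (intro card_mono) auto
          then have "card Q \<le> D - Max P" by simp
          moreover have "lo \<le> card Q" using olen[OF that(1) Q'] by blast
          ultimately show False using c lt by linarith
        qed
      qed
      moreover have "D - lo + 1 - 1 = D - lo" by simp
      ultimately show ?thesis unfolding B_def by (metis (no_types, lifting))
    qed
    moreover have "D - lo + 1 \<in> {1..D}" "D \<in> {1..D}" "1 \<in> {1..D}" "lo \<in> {1..D}"
      using h assms(1) by auto
    ultimately show "S 1 = S lo \<and> T (D - lo + 1) = T D" using SA TB by metis
  qed
  have part5: "\<forall>d. 1 \<le> d \<and> d + lo \<le> D \<longrightarrow> S (d + lo) - int N \<le> T d"
  proof (intro allI impI)
    fix d assume h: "1 \<le> d \<and> d + lo \<le> D"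
    have sub: "B d \<subseteq> A (d + lo)"
    proof -
      have "Min P \<le> d + lo" if "i < N" "period D f i True P" "Max P \<le> d - 1" for i P
        using period_facts(2)[OF that(2)] that(3) by linarith
      then show ?thesis unfolding A_def B_def by blast
    qed
    define X where "X = A (d + lo) - B d"
    have eq: "S (d + lo) - T d = int (card X)" unfolding X_def
      using diff[OF _ _ sub] h by auto
    have inj: "inj_on fst X"
    proof
      fix x y assume xy: "x \<in> X" "y \<in> X" "fst x = fst y"
      obtain i P1 where x: "x = (i, P1)" by (cases x)
      obtain j P2 where y: "y = (j, P2)" by (cases y)
      have ij: "i = j" using xy x y by simp
      have p1: "i < N" "period D f i True P1" "Min P1 \<le> d + lo" "\<not> Max P1 \<le> d - 1"
        using xy(1) x unfolding X_def A_def B_def by auto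
      have p2: "period D f i True P2" "Min P2 \<le> d + lo" "\<not> Max P2 \<le> d - 1"
        using xy(2) y ij unfolding X_def A_def B_def by auto
      have off: "\<And>Q. period D f i False Q \<Longrightarrow> lo \<le> card Q" using olen p1(1) by blast
      have "P1 = P2"
      proof (rule ccontr)
        assume "P1 \<noteq> P2"
        then have "Max P1 < Min P2 \<or> Max P2 < Min P1" using period_order[OF p1(2) p2(1)] by blast
        then show False
        proof
          assume "Max P1 < Min P2"
          then have "Max P1 + lo < Min P2" using gap[OF off p1(2) p2(1)] by blast
          then show False using p1(4) p2(2) h by linarith
        next
          assume "Max P2 < Min P1"
          then have "Max P2 + lo < Min P1" using gap[OF off p2(1) p1(2)] by blast
          then show False using p2(3) p1(3) h by linarith
        qed
      qed
      then show "x = y" using x y ij by simp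
    qed
    have "fst ` X \<subseteq> {..<N}" unfolding X_def A_def by auto
    then have "card (fst ` X) \<le> N" using card_mono[of "{..<N}"] by fastforce
    then have "card X \<le> N" using card_image[OF inj] by simp
    then show "S (d + lo) - int N \<le> T d" using eq by linarith
  qed
  have part6: "\<forall>d. 1 \<le> d \<and> d + uo \<le> D \<longrightarrow> T d + int N \<le> S (d + uo)"
  proof (intro allI impI)
    fix d assume h: "1 \<le> d \<and> d + uo \<le> D"
    have sub: "B d \<subseteq> A (d + uo)"
    proof -
      have "Min P \<le> d + uo" if "i < N" "period D f i True P" "Max P \<le> d - 1" for i P
        using period_facts(2)[OF that(2)] that(3) by linarith
      then show ?thesis unfolding A_def B_def by blast
    qed
    define X where "X = A (d + uo) - B d"
    have eq: "S (d + uo) - T d = int (card X)" unfolding X_def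
      using diff[OF _ _ sub] h by auto
    have finX: "finite X" unfolding X_def using finA by blast
    have "{..<N} \<subseteq> fst ` X"
    proof
      fix i assume "i \<in> {..<N}"
      then have iN: "i < N" by simp
      have "\<exists>P. period D f i True P \<and> Min P \<le> d + uo \<and> d \<le> Max P"
      proof (cases "\<exists>x\<in>{d..d + uo}. f i x")
        case True
        then obtain x where x: "x \<in> {d..d + uo}" "f i x" by blast
        have xm: "x \<in> {1..D}" using x h by auto
        obtain P where P: "period D f i (f i x) P" "x \<in> P" using period_exists[OF xm] by blast
        have P': "period D f i True P" using P(1) x(2) by simp
        have "Min P \<le> x \<and> x \<le> Max P" using period_mem_iff[OF P'] P(2) by blast
        then show ?thesis using P' x(1) by auto
      next
        case False
        then have allF: "\<forall>x\<in>{d..d + uo}. f i x = False" by blast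
        have dm: "d \<in> {1..D}" using h by auto
        obtain Q where Q: "period D f i (f i d) Q" "d \<in> Q" using period_exists[OF dm] by blast
        have Q': "period D f i False Q" using Q(1) allF h by auto
        have sb: "status_block D f i False {d..d + uo}"
          using block_interval[of d "d + uo" D f i False] allF h by auto
        have "status_block D f i False (Q \<union> {d..d + uo})"
          using block_union[of D f i False Q "{d..d + uo}" d] Q' Q(2) sb h
          unfolding period_def by auto
        then have "Q \<union> {d..d + uo} = Q" using Q' unfolding period_def by blast
        then have "{d..d + uo} \<subseteq> Q" by blast
        then have "card {d..d + uo} \<le> card Q" using period_facts(7)[OF Q'] card_mono by blast
        then have "Suc uo \<le> card Q" by simp
        moreover have "card Q \<le> uo" using olen[OF iN Q'] by blast
        ultimately show ?thesis by simp
      qed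
      then obtain P where P: "period D f i True P" "Min P \<le> d + uo" "d \<le> Max P" by blast
      have "(i, P) \<in> X" unfolding X_def A_def B_def using P iN h by auto
      then show "i \<in> fst ` X" by force
    qed
    then have "card {..<N} \<le> card (fst ` X)" using card_mono finX by blast
    also have "\<dots> \<le> card X" using card_image_le[OF finX] .
    finally have "N \<le> card X" by simp
    then show "T d + int N \<le> S (d + uo)" using eq by linarith
  qed
  have part7: "\<forall>d\<in>{1..D}. int (rl d) \<le> S d - T d \<and> S d - T d \<le> int (ru d)"
  proof
    fix d assume dm: "d \<in> {1..D}"
    have sub: "B d \<subseteq> A d"
    proof -
      have "Min P \<le> d" if "i < N" "period D f i True P" "Max P \<le> d - 1" for i P
        using period_facts(2)[OF that(2)] that(3) by linarith
      then show ?thesis unfolding A_def B_def by blast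
    qed
    define X where "X = A d - B d"
    have eq: "S d - T d = int (card X)" unfolding X_def using diff[OF dm dm sub] .
    have memX: "(i, P) \<in> X \<longleftrightarrow> i < N \<and> period D f i True P \<and> d \<in> P" for i P
    proof -
      have "period D f i True P \<Longrightarrow> (d \<in> P \<longleftrightarrow> Min P \<le> d \<and> \<not> Max P \<le> d - 1)"
        using period_mem_iff[of D f i True P d] dm by auto
      then show ?thesis unfolding X_def A_def B_def by auto
    qed
    have inj: "inj_on fst X"
    proof
      fix x y assume xy: "x \<in> X" "y \<in> X" "fst x = fst y"
      obtain i P1 where x: "x = (i, P1)" by (cases x)
      obtain j P2 where y: "y = (j, P2)" by (cases y)
      have ij: "i = j" using xy x y by simp
      have "period D f i True P1" "d \<in> P1" using xy(1) x memX by auto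
      moreover have "period D f i True P2" "d \<in> P2" using xy(2) y ij memX by auto
      ultimately have "P1 = P2" using period_unique by metis
      then show "x = y" using x y ij by simp
    qed
    have img: "fst ` X = {i. i < N \<and> f i d}"
    proof
      show "fst ` X \<subseteq> {i. i < N \<and> f i d}"
      proof
        fix i assume "i \<in> fst ` X"
        then obtain P where "(i, P) \<in> X" by force
        then have "i < N" "period D f i True P" "d \<in> P" using memX by auto
        then show "i \<in> {i. i < N \<and> f i d}" using period_facts(5) by blast
      qed
      show "{i. i < N \<and> f i d} \<subseteq> fst ` X"
      proof
        fix i assume "i \<in> {i. i < N \<and> f i d}"
        then have i: "i < N" "f i d" by auto
        obtain P where P: "period D f i (f i d) P" "d \<in> P" using period_exists[OF dm] by blast
        have "(i, P) \<in> X" using memX P i by simp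
        then show "i \<in> fst ` X" by force
      qed
    qed
    have "card X = card {i. i < N \<and> f i d}" using card_image[OF inj] img by simp
    then show "int (rl d) \<le> S d - T d \<and> S d - T d \<le> int (ru d)" using eq cnt[OF dm] by simp
  qed
  show ?thesis using part1 part2 part3 part4 part5 part6 part7 by blast
qed

end
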